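(* Let $\Phi_E\subseteq\Phi$ be an isolated pseudo-Levi subsystem (the root system of an isolated pseudo-Levi subgroup $E\supseteq T$). Then for any Levi subsystem $\Psi$ of $\Phi_E$ there exists $t\in T$ such that $\Phi_t=\Psi$, where $\Phi_t=\{\alpha\in\Phi:\alpha(t)=1\}$.
   Context: $G$ is a connected reductive group over an algebraically closed field $k$ of positive very good characteristic, with simply connected derived subgroup, maximal torus $T$, root system $\Phi$ with respect to $T$ spanning a Euclidean space $V$, base $\Delta$ and Weyl group $W$. A Levi subsystem of a root system $\Psi'\subset V'$ is a subsystem of the form $\Psi'\cap U$ for a subspace $U$. For $\Phi$ irreducible with highest root $\theta$ and $\tilde\Delta=\Delta\sqcup\{-\theta\}$, a pseudo-Levi subsystem is one of the form $w\cdot\langle S\rangle$ with $w\in W$, $S\subseteq\tilde\Delta$, where $\langle S\rangle=\langle S\rangle_{\mathbb Z}\cap\Phi$ (extended componentwise to non-irreducible $\Phi$); it is isolated if it is not contained in a proper Levi subsystem of $\Phi$. A pseudo-Levi subgroup is $C_G(t)$ for semisimple $t\in G$; isolated if not contained in any proper Levi subgroup. *)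

theory Defs
  imports "HOL-Analysis.Analysis" "HOL-Computational_Algebra.Polynomial"
    "HOL-Combinatorics.Permutations"
begin

text \<open>Combinatorial model of (G, T): G is encoded by its root datum
 (X, Phi, Y, Phi-check) with X = Y = int^'n, the perfect pairing being the
 standard dot product.  The torus is T = Hom(X, k^*) = (k^*)^'n.\<close>

definition pair :: "int ^ 'n \<Rightarrow> int ^ 'n \<Rightarrow> int" where
  "pair x y = (\<Sum>i\<in>UNIV. x $ i * y $ i)"

definition refl_X :: "((int ^ 'n) \<Rightarrow> (int ^ 'n)) \<Rightarrow> int ^ 'n \<Rightarrow> int ^ 'n \<Rightarrow> int ^ 'n" where
  "refl_X cor a x = x - pair x (cor a) *s a"

definition refl_Y :: "((int ^ 'n) \<Rightarrow> (int ^ 'n)) \<Rightarrow> int ^ 'n \<Rightarrow> int ^ 'n \<Rightarrow> int ^ 'n" where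
  "refl_Y cor a y = y - pair a y *s cor a"

definition root_datum :: "(int ^ 'n) set \<Rightarrow> ((int ^ 'n) \<Rightarrow> (int ^ 'n)) \<Rightarrow> bool" where
  "root_datum R cor \<longleftrightarrow> finite R \<and> inj_on cor R \<and>
     (\<forall>a\<in>R. pair a (cor a) = 2) \<and>
     (\<forall>a\<in>R. \<forall>b\<in>R. refl_X cor a b \<in> R \<and> refl_Y cor a (cor b) \<in> cor ` R) \<and>
     (\<forall>a\<in>R. 2 *s a \<notin> R)"

definition int_span :: "(int ^ 'n) set \<Rightarrow> (int ^ 'n) set" where
  "int_span S = {v. \<exists>c. v = (\<Sum>a\<in>S. c a *s a)}"

text \<open>Derived subgroup simply connected: Y / Z Phi-check is torsion free.\<close>
definition sc_derived :: "(int ^ 'n) set \<Rightarrow> ((int ^ 'n) \<Rightarrow> (int ^ 'n)) \<Rightarrow> bool" where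
  "sc_derived R cor \<longleftrightarrow> (\<forall>y. \<forall>m::int. m \<noteq> 0 \<longrightarrow> m *s y \<in> int_span (cor ` R) \<longrightarrow> y \<in> int_span (cor ` R))"

definition int_lin_indep :: "(int ^ 'n) set \<Rightarrow> bool" where
  "int_lin_indep D \<longleftrightarrow> (\<forall>c. (\<Sum>d\<in>D. c d *s d) = 0 \<longrightarrow> (\<forall>d\<in>D. c d = 0))"

definition is_base :: "(int ^ 'n) set \<Rightarrow> (int ^ 'n) set \<Rightarrow> bool" where
  "is_base R D \<longleftrightarrow> D \<subseteq> R \<and> int_lin_indep D \<and>
     (\<forall>a\<in>R. \<exists>c. a = (\<Sum>d\<in>D. c d *s d) \<and> ((\<forall>d\<in>D. c d \<ge> 0) \<or> (\<forall>d\<in>D. c d \<le> 0)))"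

text \<open>p good: p divides no (nonzero) coefficient of a root w.r.t. a base
  (equivalently, no coefficient of the highest root of any component).\<close>
definition good_prime :: "(int ^ 'n) set \<Rightarrow> (int ^ 'n) set \<Rightarrow> nat \<Rightarrow> bool" where
  "good_prime R D p \<longleftrightarrow> (\<forall>a\<in>R. \<forall>c. a = (\<Sum>d\<in>D. c d *s d) \<longrightarrow>
       (\<forall>d\<in>D. c d \<noteq> 0 \<longrightarrow> \<not> int p dvd c d))"

definition cartan_det :: "(int ^ 'n) set \<Rightarrow> ((int ^ 'n) \<Rightarrow> (int ^ 'n)) \<Rightarrow> int" where
  "cartan_det D cor = (\<Sum>\<sigma> | \<sigma> permutes D. sign \<sigma> * (\<Prod>d\<in>D. pair (\<sigma> d) (cor d)))"

text \<open>p very good: good, and p does not divide the determinant of the Cartan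
  matrix (= index of the root lattice in the weight lattice), i.e. p does not
  divide n+1 for any component of type A_n.\<close>
definition very_good :: "(int ^ 'n) set \<Rightarrow> ((int ^ 'n) \<Rightarrow> (int ^ 'n)) \<Rightarrow> nat \<Rightarrow> bool" where
  "very_good R cor p \<longleftrightarrow> (\<exists>D. is_base R D \<and> good_prime R D p \<and> \<not> int p dvd cartan_det D cor)"

definition torus_elt :: "'k::field ^ 'n \<Rightarrow> bool" where
  "torus_elt t \<longleftrightarrow> (\<forall>i. t $ i \<noteq> 0)"

definition char_val :: "int ^ 'n \<Rightarrow> 'k::field ^ 'n \<Rightarrow> 'k" where
  "char_val a t = (\<Prod>i\<in>UNIV. (t $ i) powi (a $ i))"

definition Phi_t :: "(int ^ 'n) set \<Rightarrow> 'k::field ^ 'n \<Rightarrow> (int ^ 'n) set" where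
  "Phi_t R t = {a \<in> R. char_val a t = 1}"

definition to_real :: "int ^ 'n \<Rightarrow> real ^ 'n" where
  "to_real x = (\<chi> i. real_of_int (x $ i))"

definition levi_subsystem :: "(int ^ 'n) set \<Rightarrow> (int ^ 'n) set \<Rightarrow> bool" where
  "levi_subsystem Psi' Psi \<longleftrightarrow> (\<exists>U. subspace U \<and> Psi = {a \<in> Psi'. to_real a \<in> U})"

definition isolated :: "(int ^ 'n) set \<Rightarrow> (int ^ 'n) set \<Rightarrow> bool" where
  "isolated R S \<longleftrightarrow> \<not> (\<exists>L. levi_subsystem R L \<and> L \<noteq> R \<and> S \<subseteq> L)"

end

theory Submission
  imports Defs
begin

definition toQ :: "int ^ 'n \<Rightarrow> rat ^ 'n" where "toQ x = (\<chi> i. of_int (x $ i))"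
definition ratR :: "rat ^ 'n \<Rightarrow> real ^ 'n" where "ratR x = (\<chi> i. of_rat (x $ i))"

lemma ratR_toQ: "ratR (toQ x) = to_real x"
  by (simp add: ratR_def toQ_def to_real_def)

lemma notin_Qspan:
  fixes P :: "(int ^ 'n) set"
  assumes "to_real a \<notin> span (to_real ` P)"
  shows "toQ a \<notin> vec.span (toQ ` P)"
proof
  assume h: "toQ a \<in> vec.span (toQ ` P)"
  have "vec.subspace {y. ratR y \<in> span (to_real ` P)}"
    unfolding vec.subspace_def
  proof (intro conjI ballI allI)
    show "0 \<in> {y. ratR y \<in> span (to_real ` P)}"
    proof -
      have "ratR (0::rat^'n) = 0" by (simp add: ratR_def vec_eq_iff)
      then show ?thesis by (simp add: span_zero)
    qed
  next
    fix x y assume "x \<in> {y. ratR y \<in> span (to_real ` P)}" "y \<in> {y. ratR y \<in> span (to_real ` P)}"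
    moreover have "ratR (x + y) = ratR x + ratR y" by (simp add: ratR_def vec_eq_iff of_rat_add)
    ultimately show "x + y \<in> {y. ratR y \<in> span (to_real ` P)}" by (simp add: span_add)
  next
    fix c x assume "x \<in> {y. ratR y \<in> span (to_real ` P)}"
    moreover have "ratR (c *s x) = of_rat c *\<^sub>R ratR x" by (simp add: ratR_def vec_eq_iff of_rat_mult)
    ultimately show "c *s x \<in> {y. ratR y \<in> span (to_real ` P)}" by (simp add: span_mul span_scale)
  qed
  then have "ratR (toQ a) \<in> span (to_real ` P)"
    using vec.span_induct[OF h, of "\<lambda>y. ratR y \<in> span (to_real ` P)"]
    by (metis (no_types, lifting) Collect_mem_eq image_iff ratR_toQ span_base image_eqI)
  then show False using assms by (simp add: ratR_toQ)
qed


lemma functional_exists: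
  fixes P :: "(int ^ 'n) set"
  assumes "toQ a \<notin> vec.span (toQ ` P)"
  shows "\<exists>lam :: 'n \<Rightarrow> rat. (\<forall>b\<in>P. (\<Sum>i\<in>UNIV. of_int (b $ i) * lam i) = 0) \<and> (\<Sum>i\<in>UNIV. of_int (a $ i) * lam i) \<noteq> 0"
proof -
  obtain B where B: "B \<subseteq> toQ ` P" "vec.independent B" "toQ ` P \<subseteq> vec.span B"
    using vec.maximal_independent_subset by blast
  have "vec.span (toQ ` P) \<subseteq> vec.span B" using B by (simp add: vec.span_minimal vec.subspace_span)
  then have aB: "toQ a \<notin> vec.span B" using assms vec.span_mono[OF B(1)] by blast
  then have ind: "vec.independent (insert (toQ a) B)" using B(2) vec.independent_insertI by blast
  obtain g :: "rat ^ 'n \<Rightarrow> rat ^ 'n" where g: "Vector_Spaces.linear (*s) (*s) g"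
     "\<forall>x\<in>insert (toQ a) B. g x = (if x = toQ a then 1 else 0)"
    using vec.linear_independent_extend[OF ind, of "\<lambda>x. if x = toQ a then (1::rat^'n) else 0"] by blast
  obtain j :: 'n where True by simp
  define lam where "lam i = g (axis i 1) $ j" for i
  have gc: "g x $ j = (\<Sum>i\<in>UNIV. x $ i * lam i)" for x
    unfolding lam_def by (rule linear_componentwise[OF g(1)])
  have "g x = 0" if "x \<in> vec.span B" for x
  proof -
    interpret gl: Vector_Spaces.linear "(*s)" "(*s)" g by (rule g(1))
    show ?thesis
      by (rule gl.eq_0_on_span[OF _ that]) (use g(2) aB vec.span_base in auto)
  qed
  then have "\<forall>b\<in>P. (\<Sum>i\<in>UNIV. of_int (b $ i) * lam i) = 0"
  proof (intro ballI)
    fix b assume "b \<in> P"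
    then have "g (toQ b) = 0" using B(3) \<open>\<And>x. x \<in> vec.span B \<Longrightarrow> g x = 0\<close> by blast
    then show "(\<Sum>i\<in>UNIV. of_int (b $ i) * lam i) = 0" using gc[of "toQ b"] by (simp add: toQ_def)
  qed
  moreover have "(\<Sum>i\<in>UNIV. of_int (a $ i) * lam i) \<noteq> 0"
    using gc[of "toQ a"] g(2) by (simp add: toQ_def)
  ultimately show ?thesis by blast
qed


lemma clear_denoms:
  fixes lam :: "'n::finite \<Rightarrow> rat"
  shows "\<exists>d::int. d > 0 \<and> (\<forall>i. \<exists>m::int. of_int d * lam i = of_int m)"
proof -
  define d where "d = (\<Prod>i\<in>UNIV. snd (quotient_of (lam i)))"
  have pos: "snd (quotient_of (lam i)) > 0" for i
    by (metis prod.collapse quotient_of_denom_pos)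
  have "d > 0" unfolding d_def by (rule prod_pos) (use pos in auto)
  moreover have "\<exists>m::int. of_int d * lam i = of_int m" for i
  proof -
    obtain p q where pq: "quotient_of (lam i) = (p, q)" by (cases "quotient_of (lam i)") auto
    then have li: "lam i = of_int p / of_int q" by (rule quotient_of_div)
    have q0: "q > 0" using pos[of i] pq by simp
    have "q dvd d" unfolding d_def using pq using dvd_prodI[of UNIV i "\<lambda>i. snd (quotient_of (lam i))"] by simp
    then obtain e where e: "d = q * e" by blast
    have "of_int d * lam i = of_int (e * p)" using q0 by (simp add: li e field_simps)
    then show ?thesis by blast
  qed
  ultimately show ?thesis by blast
qed

lemma int_functional:
  fixes P :: "(int ^ 'n) set"
  assumes "to_real a \<notin> span (to_real ` P)"
  shows "\<exists>mu :: int ^ 'n. (\<forall>b\<in>P. pair b mu = 0) \<and> pair a mu \<noteq> 0"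
proof -
  obtain lam :: "'n \<Rightarrow> rat" where lam: "\<forall>b\<in>P. (\<Sum>i\<in>UNIV. of_int (b $ i) * lam i) = 0"
    "(\<Sum>i\<in>UNIV. of_int (a $ i) * lam i) \<noteq> 0"
    using functional_exists[OF notin_Qspan[OF assms]] by blast
  obtain d :: int where d: "d > 0" "\<forall>i. \<exists>m::int. of_int d * lam i = of_int m"
    using clear_denoms by blast
  define mu where "mu = (\<chi> i. SOME m::int. of_int d * lam i = of_int m)"
  have mu: "of_int (mu $ i) = of_int d * lam i" for i
    unfolding mu_def using someI_ex[OF d(2)[rule_format, of i]] by simp
  have key: "(of_int (pair x mu) :: rat) = of_int d * (\<Sum>i\<in>UNIV. of_int (x $ i) * lam i)" for x
    by (simp add: pair_def mu sum_distrib_left mult_ac)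
  have "\<forall>b\<in>P. pair b mu = 0"
  proof
    fix b assume "b \<in> P"
    then have "(of_int (pair b mu) :: rat) = 0" using key[of b] lam(1) by simp
    then show "pair b mu = 0" by simp
  qed
  moreover have "pair a mu \<noteq> 0"
  proof
    assume "pair a mu = 0"
    then have "(of_int (pair a mu) :: rat) = 0" by simp
    then show False using key[of a] lam(2) d(1) by simp
  qed
  ultimately show ?thesis by blast
qed

lemma pair_add_smul: "pair x (m + c *s n) = pair x m + c * pair x n"
  by (simp add: pair_def sum.distrib sum_distrib_left algebra_simps)

lemma pair_zero: "pair x 0 = 0"
  by (simp add: pair_def)

lemma finite_lin_zero:
  assumes "a \<noteq> 0 \<or> b \<noteq> 0"
  shows "finite {M::int. a + M * b = 0}"
proof (cases "b = 0")
  case True then show ?thesis using assms by simp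
next
  case False
  have "{M::int. a + M * b = 0} \<subseteq> {(-a) div b}"
  proof
    fix M assume "M \<in> {M::int. a + M * b = 0}"
    then have "M * b = -a" by simp
    then have "(-a) div b = M" using False by (metis nonzero_mult_div_cancel_right)
    then show "M \<in> {(-a) div b}" by simp
  qed
  then show ?thesis by (rule finite_subset) simp
qed

lemma combine:
  fixes P :: "(int ^ 'n) set"
  assumes "finite A"
    and "\<forall>a\<in>A. \<exists>mu. (\<forall>b\<in>P. pair b mu = 0) \<and> pair a mu \<noteq> 0"
  shows "\<exists>mu. (\<forall>b\<in>P. pair b mu = 0) \<and> (\<forall>a\<in>A. pair a mu \<noteq> 0)"
  using assms
proof (induction A rule: finite_induct)
  case empty
  then show ?case by (intro exI[of _ 0]) (simp add: pair_zero)
next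
  case (insert x F)
  then obtain mu where mu: "\<forall>b\<in>P. pair b mu = 0" "\<forall>a\<in>F. pair a mu \<noteq> 0" by blast
  obtain nu where nu: "\<forall>b\<in>P. pair b nu = 0" "pair x nu \<noteq> 0" using insert.prems by blast
  have fin: "finite (\<Union>a\<in>insert x F. {M::int. pair a mu + M * pair a nu = 0})"
    using insert.hyps(1) mu(2) nu(2) by (intro finite_UN_I) (auto intro!: finite_lin_zero)
  obtain M where M: "M \<notin> (\<Union>a\<in>insert x F. {M::int. pair a mu + M * pair a nu = 0})"
    using ex_new_if_finite[OF infinite_UNIV_int fin] by blast
  show ?case
    by (intro exI[of _ "mu + M *s nu"]) (use M mu(1) nu(1) in \<open>auto simp: pair_add_smul\<close>)
qed


lemma finite_pow_eq:
  fixes b :: "'a::field"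
  assumes "n > 0"
  shows "finite {c. c ^ n = b}"
proof -
  define p where "p = monom (1::'a) n - [:b:]"
  have "coeff p n = 1" using assms by (cases n) (auto simp: p_def coeff_monom)
  then have "p \<noteq> 0" by auto
  then have "finite {c. poly p c = 0}" by (rule poly_roots_finite)
  moreover have "{c. c ^ n = b} = {c. poly p c = 0}" by (simp add: p_def poly_monom)
  ultimately show ?thesis by simp
qed

lemma finite_powi_eq:
  fixes a :: "'a::field"
  assumes "m \<noteq> 0"
  shows "finite {c. a * c powi m = 1}"
proof (cases "m > 0")
  case True
  have "{c. a * c powi m = 1} \<subseteq> {c. c ^ nat m = inverse a}"
  proof
    fix c assume "c \<in> {c. a * c powi m = 1}"
    then have "a * c ^ nat m = 1" using True by (simp add: power_int_def)
    then show "c \<in> {c. c ^ nat m = inverse a}" using inverse_unique[of a "c ^ nat m"] by simp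
  qed
  then show ?thesis using finite_pow_eq[of "nat m" "inverse a"] True finite_subset by auto
next
  case False
  then have m: "m < 0" using assms by simp
  have "{c. a * c powi m = 1} \<subseteq> {c. c ^ nat (-m) = a}"
  proof
    fix c assume "c \<in> {c. a * c powi m = 1}"
    then have "a * inverse (c ^ nat (-m)) = 1" using m by (simp add: power_int_def power_inverse)
    then show "c \<in> {c. c ^ nat (-m) = a}"
      using inverse_unique[of a "inverse (c ^ nat (-m))"] by simp
  qed
  then show ?thesis using finite_pow_eq[of "nat (-m)" a] m finite_subset by auto
qed

lemma alg_closed_infinite: "infinite (UNIV :: 'a::alg_closed_field set)"
proof
  assume fin: "finite (UNIV :: 'a set)"
  define p :: "'a poly" where "p = (\<Prod>x\<in>UNIV. [:-x, 1:]) + 1"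
  have "degree (\<Prod>x\<in>(UNIV::'a set). [:-x, 1:]) = card (UNIV :: 'a set)"
    by (subst degree_prod_eq_sum_degree) auto
  moreover have "card (UNIV :: 'a set) > 0" using fin by (simp add: card_gt_0_iff)
  ultimately have "degree p > 0" by (simp add: p_def degree_add_eq_left)
  then obtain x where "poly p x = 0" using alg_closed_imp_poly_has_root by blast
  moreover have "poly (\<Prod>x\<in>UNIV. [:-x, 1:]) x = 0"
    using fin by (simp add: poly_prod prod_zero_iff)
  ultimately show False by (simp add: p_def)
qed

lemma prod_powi_sum:
  fixes c :: "'a::field"
  assumes "c \<noteq> 0"
  shows "(\<Prod>i\<in>A. c powi f i) = c powi (\<Sum>i\<in>A. f i)"
  by (induction A rule: infinite_finite_induct) (auto simp: power_int_add assms)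

lemma char_val_shift:
  fixes s :: "'k::field ^ 'n" and c :: 'k
  assumes "c \<noteq> 0"
  shows "char_val a (\<chi> i. s $ i * c powi (mu $ i)) = char_val a s * c powi (pair a mu)"
proof -
  have "char_val a (\<chi> i. s $ i * c powi (mu $ i)) = (\<Prod>i\<in>UNIV. s $ i powi (a $ i) * c powi (a $ i * mu $ i))"
    unfolding char_val_def
  proof (intro prod.cong refl)
    fix i
    show "(\<chi> i. s $ i * c powi mu $ i) $ i powi a $ i = s $ i powi a $ i * c powi (a $ i * mu $ i)"
      using power_int_mult[of c "mu $ i" "a $ i"] by (simp add: power_int_mult_distrib mult.commute)
  qed
  also have "\<dots> = char_val a s * (\<Prod>i\<in>UNIV. c powi (a $ i * mu $ i))"
    by (simp add: char_val_def prod.distrib)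
  also have "\<dots> = char_val a s * c powi (pair a mu)"
    by (simp add: prod_powi_sum assms pair_def)
  finally show ?thesis .
qed


theorem lemma2p1:
  fixes R :: "(int ^ 'n) set" and cor :: "int ^ 'n \<Rightarrow> int ^ 'n"
    and s :: "'k::alg_closed_field ^ 'n" and Psi :: "(int ^ 'n) set"
  assumes "root_datum R cor"
    and "sc_derived R cor"
    and "CHAR('k) > 0"
    and "very_good R cor CHAR('k)"
    and "torus_elt s"
    and "isolated R (Phi_t R s)"
    and "levi_subsystem (Phi_t R s) Psi"
  shows "\<exists>t::'k ^ 'n. torus_elt t \<and> Phi_t R t = Psi"
proof -
  obtain U where U: "subspace U" "Psi = {a \<in> Phi_t R s. to_real a \<in> U}"
    using assms(7) unfolding levi_subsystem_def by blast
  have finR: "finite R" using assms(1) unfolding root_datum_def by blast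
  have PsiS: "Psi \<subseteq> Phi_t R s" using U(2) by blast
  have PhiR: "Phi_t R s \<subseteq> R" unfolding Phi_t_def by blast
  define A where "A = Phi_t R s - Psi"
  have finA: "finite A" unfolding A_def using finR PhiR finite_subset by blast
  have spanU: "span (to_real ` Psi) \<subseteq> U" by (rule span_minimal) (use U in auto)
  have "\<forall>a\<in>A. \<exists>mu. (\<forall>b\<in>Psi. pair b mu = 0) \<and> pair a mu \<noteq> 0"
  proof
    fix a assume "a \<in> A"
    then have "to_real a \<notin> U" unfolding A_def using U(2) by blast
    then have "to_real a \<notin> span (to_real ` Psi)" using spanU by blast
    then show "\<exists>mu. (\<forall>b\<in>Psi. pair b mu = 0) \<and> pair a mu \<noteq> 0" by (rule int_functional)
  qed
  then obtain mu where mu: "\<forall>b\<in>Psi. pair b mu = 0" "\<forall>a\<in>A. pair a mu \<noteq> 0"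
    using combine[OF finA] by blast
  define Cbad where "Cbad = insert (0::'k) (\<Union>a\<in>{a\<in>R. pair a mu \<noteq> 0}. {c. char_val a s * c powi (pair a mu) = 1})"
  have "finite Cbad" unfolding Cbad_def using finR by (auto intro!: finite_powi_eq)
  then obtain c where c: "c \<notin> Cbad" using ex_new_if_finite[OF alg_closed_infinite] by blast
  then have c0: "c \<noteq> 0" unfolding Cbad_def by blast
  define t where "t = (\<chi> i. s $ i * c powi (mu $ i))"
  have tt: "torus_elt t" using assms(5) c0 unfolding torus_elt_def t_def by simp
  have cv: "char_val a t = char_val a s * c powi (pair a mu)" for a
    unfolding t_def by (rule char_val_shift[OF c0])
  have "Phi_t R t = Psi"
  proof
    show "Psi \<subseteq> Phi_t R t"
    proof
      fix a assume "a \<in> Psi"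
      then have "a \<in> R" "char_val a s = 1" "pair a mu = 0" using PsiS mu(1) unfolding Phi_t_def by auto
      then show "a \<in> Phi_t R t" unfolding Phi_t_def using cv by simp
    qed
  next
    show "Phi_t R t \<subseteq> Psi"
    proof
      fix a assume a: "a \<in> Phi_t R t"
      then have aR: "a \<in> R" and a1: "char_val a s * c powi (pair a mu) = 1"
        unfolding Phi_t_def using cv by auto
      show "a \<in> Psi"
      proof (rule ccontr)
        assume "a \<notin> Psi"
        show False
        proof (cases "pair a mu = 0")
          case True
          then have "char_val a s = 1" using a1 by simp
          then have "a \<in> A" using aR \<open>a \<notin> Psi\<close> unfolding A_def Phi_t_def by simp
          then show False using mu(2) True by blast
        next
          case False
          then have "c \<in> Cbad" unfolding Cbad_def using aR a1 by blast
          then show False using c by blast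
        qed
      qed
    qed
  qed
  then show ?thesis using tt by blast
qed

end
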